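(* Let $X$ be a regular Type I pseudocompact space and $Y$ any space. Then $X$ is countably compact, and $\mathsf{P}(X,Y)\Leftrightarrow\mathsf{P_{cpt}}(X,Y)$ for each $\mathsf{P}\in\{\mathsf{EC},\mathsf{S},\mathsf{L},\mathsf{BR}\}$.
   Context: All spaces are Hausdorff and maps continuous. A space is pseudocompact if every continuous real-valued function on it is bounded (no further separation axiom assumed). A space $X$ is of Type I if $X=\bigcup_{\alpha<\omega_1}X_\alpha$ with $X_\alpha$ open, $\overline{X_\alpha}\subset X_\beta$ for $\alpha<\beta$, $\overline{X_\alpha}$ Lindelöf, and $X\neq X_\alpha$ for all $\alpha$. For a non-Lindelöf space $X$ and a space $Y$, and for every continuous $f:X\to Y$: $\mathsf{EC}(X,Y)$ asks for a Lindelöf $Z\subset X$ with $f(X\setminus Z)$ a singleton; $\mathsf{S}(X,Y)$ asks for a Lindelöf $Z\subset X$ and a retraction $r:X\to Z$ with $f\circ r=f$; $\mathsf{L}(X,Y)$ asks for a Lindelöf $Z$ with $f(Z)=f(X)$; $\mathsf{BR}(X,Y)$ asks for a Lindelöf $Z$ with $f(X\setminus W)=f(X\setminus Z)$ for every Lindelöf $W\supseteq Z$. $\mathsf{P_{cpt}}$ is obtained from $\mathsf{P}$ by replacing every occurrence of "Lindelöf" by "compact" (including for $W$ in $\mathsf{BR}$). *)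

theory Defs
  imports "HOL-Analysis.Analysis"
begin

definition countably_compact_space :: "'a topology \<Rightarrow> bool" where
  "countably_compact_space X \<longleftrightarrow>
     (\<forall>\<U>. countable \<U> \<and> (\<forall>U\<in>\<U>. openin X U) \<and> topspace X \<subseteq> \<Union>\<U>
        \<longrightarrow> (\<exists>\<F>\<subseteq>\<U>. finite \<F> \<and> topspace X \<subseteq> \<Union>\<F>))"

definition pseudocompact_space :: "'a topology \<Rightarrow> bool" where
  "pseudocompact_space X \<longleftrightarrow>
     (\<forall>f. continuous_map X euclideanreal f \<longrightarrow> bounded (f ` topspace X))"

abbreviation omega1 :: "nat set rel" where
  "omega1 \<equiv> cardSuc natLeq"

definition typeI_space :: "'a topology \<Rightarrow> bool" where
  "typeI_space X \<longleftrightarrow>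
     (\<exists>U :: nat set \<Rightarrow> 'a set.
        topspace X = (\<Union>\<alpha>\<in>Field omega1. U \<alpha>) \<and>
        (\<forall>\<alpha>\<in>Field omega1. openin X (U \<alpha>)
            \<and> Lindelof_space (subtopology X (X closure_of (U \<alpha>)))
            \<and> U \<alpha> \<noteq> topspace X) \<and>
        (\<forall>\<alpha>\<in>Field omega1. \<forall>\<beta>\<in>Field omega1.
            (\<alpha>, \<beta>) \<in> omega1 \<and> \<alpha> \<noteq> \<beta> \<longrightarrow> X closure_of (U \<alpha>) \<subseteq> U \<beta>))"

definition lindelof_in :: "'a topology \<Rightarrow> 'a set \<Rightarrow> bool" where
  "lindelof_in X Z \<longleftrightarrow> Z \<subseteq> topspace X \<and> Lindelof_space (subtopology X Z)"

text \<open>The four properties, parametrised by the smallness notion Q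
  (Q = lindelof_in gives P, Q = compactin gives P_cpt).\<close>
definition EC_prop :: "('a topology \<Rightarrow> 'a set \<Rightarrow> bool) \<Rightarrow> 'a topology \<Rightarrow> 'b topology \<Rightarrow> bool" where
  "EC_prop Q X Y \<longleftrightarrow> (\<forall>f. continuous_map X Y f \<longrightarrow>
     (\<exists>Z. Z \<subseteq> topspace X \<and> Q X Z \<and> (\<exists>y. f ` (topspace X - Z) = {y})))"

definition S_prop :: "('a topology \<Rightarrow> 'a set \<Rightarrow> bool) \<Rightarrow> 'a topology \<Rightarrow> 'b topology \<Rightarrow> bool" where
  "S_prop Q X Y \<longleftrightarrow> (\<forall>f. continuous_map X Y f \<longrightarrow>
     (\<exists>Z r. Z \<subseteq> topspace X \<and> Q X Z \<and>
        continuous_map X (subtopology X Z) r \<and> (\<forall>x\<in>Z. r x = x) \<and>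
        (\<forall>x\<in>topspace X. f (r x) = f x)))"

definition L_prop :: "('a topology \<Rightarrow> 'a set \<Rightarrow> bool) \<Rightarrow> 'a topology \<Rightarrow> 'b topology \<Rightarrow> bool" where
  "L_prop Q X Y \<longleftrightarrow> (\<forall>f. continuous_map X Y f \<longrightarrow>
     (\<exists>Z. Z \<subseteq> topspace X \<and> Q X Z \<and> f ` Z = f ` topspace X))"

definition BR_prop :: "('a topology \<Rightarrow> 'a set \<Rightarrow> bool) \<Rightarrow> 'a topology \<Rightarrow> 'b topology \<Rightarrow> bool" where
  "BR_prop Q X Y \<longleftrightarrow> (\<forall>f. continuous_map X Y f \<longrightarrow>
     (\<exists>Z. Z \<subseteq> topspace X \<and> Q X Z \<and>
        (\<forall>W. Z \<subseteq> W \<and> W \<subseteq> topspace X \<and> Q X W \<longrightarrow>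
             f ` (topspace X - W) = f ` (topspace X - Z))))"

end

theory Submission
  imports Defs
begin

unbundle cardinal_syntax

lemma countable_card_le_natLeq': "countable A \<longleftrightarrow> |A| \<le>o natLeq"
proof -
  have "countable A \<longleftrightarrow> |A| \<le>o |UNIV::nat set|"
    unfolding countable_def card_of_ordLeq[symmetric] by auto
  then show ?thesis using card_of_nat ordLeq_ordIso_trans ordIso_symmetric by blast
qed

lemma om1_CO: "Card_order omega1"
  by (simp add: cardSuc_Card_order natLeq_Card_order)

lemma om1_inf: "\<not> finite (Field omega1)"
  using cardSuc_finite[OF natLeq_Card_order] by (simp add: Field_natLeq)

lemma om1_trans: "trans omega1"
  using om1_CO unfolding card_order_on_def well_order_on_def linear_order_on_def partial_order_on_def preorder_on_def by blast

lemma om1_refl: "a \<in> Field omega1 \<Longrightarrow> (a,a) \<in> omega1"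
  using om1_CO unfolding card_order_on_def well_order_on_def linear_order_on_def partial_order_on_def preorder_on_def refl_on_def by blast

lemma om1_succ: "a \<in> Field omega1 \<Longrightarrow> \<exists>b\<in>Field omega1. a \<noteq> b \<and> (a,b) \<in> omega1"
  using infinite_Card_order_limit[OF om1_CO om1_inf] by blast

lemma om1_bound:
  assumes "countable A" "A \<subseteq> Field omega1"
  shows "\<exists>i\<in>Field omega1. \<forall>a\<in>A. (a,i) \<in> omega1"
proof -
  have ch: "relChain omega1 (under omega1)"
    unfolding relChain_def under_def using om1_trans by (auto elim: transE)
  have "A \<subseteq> (\<Union>i\<in>Field omega1. under omega1 i)"
    using assms(2) om1_refl unfolding under_def by blast
  then obtain i where "i \<in> Field omega1" "A \<subseteq> under omega1 i"
    using cardSuc_UNION[OF natLeq_Card_order _ ch, of A] assms(1)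
    by (auto simp: Field_natLeq countable_card_le_natLeq')
  then show ?thesis unfolding under_def by auto
qed


lemma paste2:
  assumes "closedin X A" "closedin X B" "topspace X \<subseteq> A \<union> B"
    "continuous_map (subtopology X A) Y f" "continuous_map (subtopology X B) Y g"
    "\<And>x. x \<in> topspace X \<Longrightarrow> x \<in> A \<Longrightarrow> x \<in> B \<Longrightarrow> f x = g x"
  shows "continuous_map X Y (\<lambda>x. if x \<in> A then f x else g x)"
proof (rule pasting_lemma_closed[where I="{True,False}" and T="\<lambda>b. if b then A else B"
      and f="\<lambda>b. if b then f else g"])
  show "finite {True, False}" by simp
  show "\<And>i. i \<in> {True, False} \<Longrightarrow> closedin X (if i then A else B)" using assms(1,2) by simp
  show "\<And>i. i \<in> {True, False} \<Longrightarrow> continuous_map (subtopology X (if i then A else B)) Y (if i then f else g)"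
    using assms(4,5) by simp
  show "\<And>i j x. i \<in> {True, False} \<Longrightarrow> j \<in> {True, False} \<Longrightarrow> x \<in> topspace X \<inter> (if i then A else B) \<inter> (if j then A else B)
     \<Longrightarrow> (if i then f else g) x = (if j then f else g) x"
    using assms(6) by (auto split: if_splits)
  show "\<And>x. x \<in> topspace X \<Longrightarrow> \<exists>j. j \<in> {True, False} \<and> x \<in> (if j then A else B) \<and> (if x \<in> A then f x else g x) = (if j then f else g) x"
  proof -
    fix x assume "x \<in> topspace X"
    then show "\<exists>j. j \<in> {True, False} \<and> x \<in> (if j then A else B) \<and> (if x \<in> A then f x else g x) = (if j then f else g) x"
    proof (cases "x \<in> A")
      case True then show ?thesis by (intro exI[of _ True]) simp
    next
      case False then show ?thesis using assms(3) \<open>x \<in> topspace X\<close> by (intro exI[of _ False]) auto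
    qed
  qed
qed


lemma LF:
  assumes "t1_space X" "D \<subseteq> topspace X"
    and lf: "\<And>y. y \<in> topspace X \<Longrightarrow> \<exists>N. openin X N \<and> y \<in> N \<and> finite (N \<inter> D)"
  shows "closedin X D \<and> subtopology X D = discrete_topology D"
proof
  show "closedin X D"
    unfolding closedin_def
  proof (intro conjI assms(2) openin_subopen[THEN iffD2] ballI)
    fix y assume y: "y \<in> topspace X - D"
    then obtain N where N: "openin X N" "y \<in> N" "finite (N \<inter> D)" using lf by blast
    have "closedin X (N \<inter> D)"
      using assms(1) N(3) assms(2) unfolding t1_space_closedin_finite by blast
    then have "openin X (N - (N \<inter> D))" using N(1) by blast
    then show "\<exists>T. openin X T \<and> y \<in> T \<and> T \<subseteq> topspace X - D"
      using N y openin_subset by (intro exI[of _ "N - (N \<inter> D)"]) auto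
  qed
  show "subtopology X D = discrete_topology D"
  proof (rule sym, subst discrete_topology_unique, intro conjI ballI)
    show "topspace (subtopology X D) = D" using assms(2) by auto
    fix d assume d: "d \<in> D"
    then obtain N where N: "openin X N" "d \<in> N" "finite (N \<inter> D)" using lf assms(2) by blast
    have "closedin X ((N \<inter> D) - {d})"
      using assms(1) N(3) assms(2) unfolding t1_space_closedin_finite by blast
    then have "openin X (N - ((N \<inter> D) - {d}))" using N(1) by blast
    moreover have "{d} = (N - ((N \<inter> D) - {d})) \<inter> D" using d N by auto
    ultimately show "openin (subtopology X D) {d}"
      unfolding openin_subtopology by blast
  qed
qed


lemma CC:
  assumes "countably_compact_space X" "closedin X K" "Lindelof_space (subtopology X K)"
  shows "compactin X K"
  unfolding compactin_def
proof (intro conjI allI impI)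
  show K: "K \<subseteq> topspace X" using assms(2) closedin_subset by blast
  fix \<U> assume U: "(\<forall>U\<in>\<U>. openin X U) \<and> K \<subseteq> \<Union>\<U>"
  obtain V where V: "countable V" "V \<subseteq> \<U>" "K \<subseteq> \<Union>V"
    using assms(3)[unfolded Lindelof_space_subtopology_subset[OF K], rule_format, of \<U>] U by auto
  define W where "W = insert (topspace X - K) V"
  have "countable W" using V W_def by auto
  moreover have "\<forall>w\<in>W. openin X w" using U V assms(2) W_def by auto
  moreover have "topspace X \<subseteq> \<Union>W" using V W_def by auto
  ultimately have "\<exists>F\<subseteq>W. finite F \<and> topspace X \<subseteq> \<Union>F"
    using assms(1)[unfolded countably_compact_space_def, rule_format, of W] by simp
  then obtain F where F: "F \<subseteq> W" "finite F" "topspace X \<subseteq> \<Union>F" by blast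
  have "F - {topspace X - K} \<subseteq> \<U>" using F(1) V(2) W_def by auto
  moreover have "K \<subseteq> \<Union>(F - {topspace X - K})" using F(3) K by blast
  moreover have "finite (F - {topspace X - K})" using F(2) by simp
  ultimately show "\<exists>\<F>. finite \<F> \<and> \<F> \<subseteq> \<U> \<and> K \<subseteq> \<Union>\<F>" by blast
qed


lemma cpt_lind: "compactin X Z \<Longrightarrow> lindelof_in X Z"
  unfolding lindelof_in_def by (simp add: compactin_subspace compact_imp_Lindelof_space)


locale tI =
  fixes X :: "'a topology" and U :: "nat set \<Rightarrow> 'a set"
  assumes Ucov: "topspace X = (\<Union>\<alpha>\<in>Field omega1. U \<alpha>)"
    and Uprop: "\<forall>\<alpha>\<in>Field omega1. openin X (U \<alpha>)
            \<and> Lindelof_space (subtopology X (X closure_of (U \<alpha>)))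
            \<and> U \<alpha> \<noteq> topspace X"
    and Uinc: "\<forall>\<alpha>\<in>Field omega1. \<forall>\<beta>\<in>Field omega1.
            (\<alpha>, \<beta>) \<in> omega1 \<and> \<alpha> \<noteq> \<beta> \<longrightarrow> X closure_of (U \<alpha>) \<subseteq> U \<beta>"
begin

lemma Uopen: "\<alpha> \<in> Field omega1 \<Longrightarrow> openin X (U \<alpha>)" using Uprop by simp
lemma Ulind: "\<alpha> \<in> Field omega1 \<Longrightarrow> Lindelof_space (subtopology X (X closure_of (U \<alpha>)))" using Uprop by simp
lemma Une: "\<alpha> \<in> Field omega1 \<Longrightarrow> U \<alpha> \<noteq> topspace X" using Uprop by simp
lemma Usub: "\<alpha> \<in> Field omega1 \<Longrightarrow> U \<alpha> \<subseteq> topspace X" by (rule openin_subset[OF Uopen])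

lemma U_mono:
  assumes "\<alpha> \<in> Field omega1" "\<beta> \<in> Field omega1" "(\<alpha>,\<beta>) \<in> omega1"
  shows "U \<alpha> \<subseteq> U \<beta>"
proof (cases "\<alpha> = \<beta>")
  case False
  have "U \<alpha> \<subseteq> X closure_of U \<alpha>" by (rule closure_of_subset[OF Usub[OF assms(1)]])
  also have "\<dots> \<subseteq> U \<beta>" using Uinc[rule_format, OF assms(1,2)] assms(3) False by simp
  finally show ?thesis .
qed simp

lemma U_bound:
  assumes "Z \<subseteq> topspace X" "Lindelof_space (subtopology X Z)"
  shows "\<exists>i\<in>Field omega1. Z \<subseteq> U i"
proof -
  have "\<forall>V\<in>U ` Field omega1. openin X V" using Uopen by auto
  moreover have "Z \<subseteq> \<Union>(U ` Field omega1)" using assms(1) Ucov by simp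
  ultimately obtain V where V: "countable V" "V \<subseteq> U ` Field omega1" "Z \<subseteq> \<Union>V"
    using assms(2)[unfolded Lindelof_space_subtopology_subset[OF assms(1)], rule_format, of "U ` Field omega1"]
    by auto
  then obtain A where A: "countable A" "A \<subseteq> Field omega1" "V = U ` A"
    using countable_subset_image[of V U "Field omega1"] by auto
  then obtain i where i: "i \<in> Field omega1" "\<forall>a\<in>A. (a,i) \<in> omega1"
    using om1_bound[OF A(1,2)] by auto
  have "\<And>a. a \<in> A \<Longrightarrow> U a \<subseteq> U i"
  proof -
    fix a assume a: "a \<in> A"
    have "(a,i) \<in> omega1" using i(2) a by simp
    then show "U a \<subseteq> U i" by (rule U_mono[OF subsetD[OF A(2) a] i(1)])
  qed
  then have "Z \<subseteq> U i"
  proof (intro subsetI)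
    fix x assume "x \<in> Z"
    then obtain a where "a \<in> A" "x \<in> U a" using V(3) A(3) by auto
    then show "x \<in> U i" using \<open>\<And>a. a \<in> A \<Longrightarrow> U a \<subseteq> U i\<close> by auto
  qed
  then show ?thesis using i(1) by auto
qed

lemma mainK:
  assumes cc: "countably_compact_space X" and Z: "lindelof_in X Z"
  shows "\<exists>K. compactin X K \<and> Z \<subseteq> K \<and> topspace X - K \<noteq> {}"
proof -
  obtain i where i: "i \<in> Field omega1" "Z \<subseteq> U i"
    using U_bound[of Z] Z unfolding lindelof_in_def by auto
  obtain j where j: "j \<in> Field omega1" "i \<noteq> j" "(i,j) \<in> omega1" using om1_succ[OF i(1)] by auto
  define K where "K = X closure_of U i"
  have "K \<subseteq> U j" using Uinc[rule_format, OF i(1) j(1)] j unfolding K_def by simp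
  then have "topspace X - K \<noteq> {}" using Une[OF j(1)] Usub[OF j(1)] by auto
  moreover have "compactin X K" unfolding K_def
    by (rule CC[OF cc closedin_closure_of Ulind[OF i(1)]])
  moreover have "Z \<subseteq> K" using i(2) closure_of_subset[OF Usub[OF i(1)]] unfolding K_def by auto
  ultimately show ?thesis by auto
qed

lemma cc:
  assumes H: "Hausdorff_space X" and R: "regular_space X" and P: "pseudocompact_space X"
  shows "countably_compact_space X"
  unfolding countably_compact_space_def
proof (intro allI impI)
  fix \<U> :: "'a set set"
  assume A: "countable \<U> \<and> (\<forall>U\<in>\<U>. openin X U) \<and> topspace X \<subseteq> \<Union>\<U>"
  show "\<exists>\<F>\<subseteq>\<U>. finite \<F> \<and> topspace X \<subseteq> \<Union>\<F>"
  proof (rule ccontr)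
    assume N: "\<not> (\<exists>\<F>\<subseteq>\<U>. finite \<F> \<and> topspace X \<subseteq> \<Union>\<F>)"
    have ne: "\<U> \<noteq> {}"
    proof
      assume "\<U> = {}"
      then have "topspace X \<subseteq> \<Union>{}" using A by simp
      then show False using N by auto
    qed
    define V where "V = from_nat_into \<U>"
    have rV: "range V = \<U>" unfolding V_def using range_from_nat_into[OF ne] A by simp
    define W where "W n = \<Union>(V ` {..n})" for n
    have Wmono: "W m \<subseteq> W n" if "m \<le> n" for m n
      unfolding W_def by (intro Union_mono image_mono) (use that in auto)
    have Vopen: "openin X (V k)" for k using A rV by auto
    have Wopen: "openin X (W n)" for n
      unfolding W_def using Vopen by auto
    have Wnot: "\<exists>y. y \<in> topspace X \<and> y \<notin> W n" for n
    proof (rule ccontr)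
      assume "\<not> (\<exists>y. y \<in> topspace X \<and> y \<notin> W n)"
      then have "topspace X \<subseteq> \<Union>(V ` {..n})" unfolding W_def by auto
      moreover have "V ` {..n} \<subseteq> \<U>" using rV by auto
      moreover have "finite (V ` {..n})" by simp
      ultimately show False using N by auto
    qed
    then obtain x where x: "\<And>n. x n \<in> topspace X" "\<And>n. x n \<notin> W n" by metis
    have Wcov: "\<exists>n. y \<in> W n" if "y \<in> topspace X" for y
    proof -
      have "topspace X \<subseteq> \<Union>(range V)" using A rV by simp
      then have "y \<in> \<Union>(range V)" using that by (rule subsetD)
      then obtain k where "y \<in> V k" by auto
      then show ?thesis unfolding W_def by auto
    qed
    define h where "h y = (LEAST n. y \<in> W n)" for y
    have hx: "n < h (x n)" for n
    proof (rule ccontr)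
      assume "\<not> n < h (x n)"
      then have "W (h (x n)) \<subseteq> W n" using Wmono by auto
      moreover have "x n \<in> W (h (x n))"
        unfolding h_def using Wcov[OF x(1)[of n]] by (rule LeastI_ex)
      ultimately show False using x(2) by auto
    qed
    define D where "D = range x"
    have Dsub: "D \<subseteq> topspace X" unfolding D_def using x(1) by auto
    have lf: "\<exists>N. openin X N \<and> y \<in> N \<and> finite (N \<inter> D)" if yX: "y \<in> topspace X" for y
    proof -
      obtain k where k: "y \<in> W k" using Wcov[OF yX] by auto
      have "W k \<inter> D \<subseteq> x ` {..<k}"
      proof
        fix z assume z: "z \<in> W k \<inter> D"
        then obtain n where n: "z = x n" unfolding D_def by auto
        have "n < k"
        proof (rule ccontr)
          assume "\<not> n < k"
          then have "W k \<subseteq> W n" using Wmono by auto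
          then show False using z n x(2)[of n] by auto
        qed
        then show "z \<in> x ` {..<k}" using n by auto
      qed
      then have "finite (W k \<inter> D)" using finite_subset by auto
      then show ?thesis using k Wopen by auto
    qed
    have LFD: "closedin X D \<and> subtopology X D = discrete_topology D"
      by (rule LF[OF Hausdorff_imp_t1_space[OF H] Dsub lf])
    have "Lindelof_space (subtopology X D)"
      by (rule countable_imp_Lindelof_space) (simp add: topspace_subtopology_subset[OF Dsub] D_def)
    then obtain i where i: "i \<in> Field omega1" "D \<subseteq> U i"
      using U_bound[OF Dsub] by auto
    define L where "L = X closure_of U i"
    have Uo: "openin X (U i)" using Uopen[OF i(1)] .
    have UL: "U i \<subseteq> L" unfolding L_def by (rule closure_of_subset[OF Usub[OF i(1)]])
    have Lcl: "closedin X L" unfolding L_def by simp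
    have nL: "normal_space (subtopology X L)"
      by (rule regular_Lindelof_imp_normal_space[OF regular_space_subtopology[OF R]])
         (simp add: L_def Ulind[OF i(1)])
    define C where "C = D \<union> (L - U i)"
    have Ccl: "closedin X C" unfolding C_def using LFD Lcl Uo by auto
    have CL: "C \<subseteq> L" unfolding C_def using i(2) UL by auto
    have Ccl': "closedin (subtopology X L) C" by (rule closedin_subset_topspace[OF Ccl CL])
    define g where "g y = (if y \<in> D then real (h y) else 0)" for y
    have gcont: "continuous_map (subtopology X C) euclideanreal (\<lambda>y. if y \<in> D then real (h y) else 0)"
    proof (rule paste2)
      show "closedin (subtopology X C) D"
        by (rule closedin_subset_topspace) (use LFD C_def in auto)
      show "closedin (subtopology X C) (L - U i)"
        by (rule closedin_subset_topspace) (use Lcl Uo C_def in auto)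
      show "topspace (subtopology X C) \<subseteq> D \<union> (L - U i)" unfolding C_def by auto
      have "subtopology (subtopology X C) D = discrete_topology D"
        using LFD by (simp add: subtopology_subtopology C_def Int_absorb1)
      then show "continuous_map (subtopology (subtopology X C) D) euclideanreal (\<lambda>y. real (h y))"
        by simp
      show "continuous_map (subtopology (subtopology X C) (L - U i)) euclideanreal (\<lambda>y. 0)"
        by simp
      show "\<And>y. y \<in> topspace (subtopology X C) \<Longrightarrow> y \<in> D \<Longrightarrow> y \<in> L - U i \<Longrightarrow> real (h y) = 0"
        using i(2) by auto
    qed
    then have gcont': "continuous_map (subtopology (subtopology X L) C) euclideanreal g"
      using CL by (simp add: subtopology_subtopology Int_absorb1 g_def[abs_def])
    obtain G where G: "continuous_map (subtopology X L) euclideanreal G" "\<And>y. y \<in> C \<Longrightarrow> G y = g y"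
      using Tietze_extension_realinterval[OF nL Ccl' is_interval_univ UNIV_not_empty gcont'] by auto
    have Fcont: "continuous_map X euclideanreal (\<lambda>y. if y \<in> L then G y else 0)"
    proof (rule paste2)
      show "closedin X L" by (rule Lcl)
      show "closedin X (topspace X - U i)" using Uo by auto
      show "topspace X \<subseteq> L \<union> (topspace X - U i)" using UL by auto
      show "continuous_map (subtopology X L) euclideanreal G" by (rule G(1))
      show "continuous_map (subtopology X (topspace X - U i)) euclideanreal (\<lambda>y. 0)" by simp
      fix y assume "y \<in> topspace X" "y \<in> L" "y \<in> topspace X - U i"
      then have "y \<in> C" "y \<notin> D" using i(2) unfolding C_def by auto
      then show "G y = 0" using G(2) g_def by auto
    qed
    define F where "F = (\<lambda>y. if y \<in> L then G y else 0)"
    have "bounded (F ` topspace X)"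
      using P Fcont unfolding pseudocompact_space_def F_def by auto
    then obtain B where B0: "\<forall>z\<in>F ` topspace X. norm z \<le> B"
      by (meson bounded_iff)
    have B: "norm (F y) \<le> B" if "y \<in> topspace X" for y
      using B0 that by simp
    define n where "n = nat \<lceil>B\<rceil>"
    have xD: "x n \<in> D" unfolding D_def by simp
    then have "x n \<in> L" "x n \<in> C" using i(2) UL unfolding C_def by auto
    then have "F (x n) = real (h (x n))"
      using G(2) xD g_def F_def by auto
    then have "real (h (x n)) \<le> B" using B[OF x(1)[of n]] by auto
    moreover have "B \<le> real n" unfolding n_def by linarith
    moreover have "real n < real (h (x n))" using hx[of n] by simp
    ultimately show False by linarith
  qed
qed

end


theorem theorem9p4:
  fixes X :: "'a topology" and Y :: "'b topology"
  assumes "Hausdorff_space X" and "Hausdorff_space Y"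
    and "regular_space X" and "typeI_space X" and "pseudocompact_space X"
  shows "countably_compact_space X
    \<and> (EC_prop lindelof_in X Y \<longleftrightarrow> EC_prop compactin X Y)
    \<and> (S_prop lindelof_in X Y \<longleftrightarrow> S_prop compactin X Y)
    \<and> (L_prop lindelof_in X Y \<longleftrightarrow> L_prop compactin X Y)
    \<and> (BR_prop lindelof_in X Y \<longleftrightarrow> BR_prop compactin X Y)"
proof -
  have "\<exists>U. tI X U"
    using assms(4) unfolding typeI_space_def tI_def .
  then obtain U where "tI X U" by (elim exE)
  then interpret tI X U .
  have cc: "countably_compact_space X" by (rule cc[OF assms(1,3,5)])
  have K: "\<exists>K. compactin X K \<and> Z \<subseteq> K \<and> topspace X - K \<noteq> {}" if "lindelof_in X Z" for Z
    by (rule mainK[OF cc that])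
  have EC: "EC_prop lindelof_in X Y \<longleftrightarrow> EC_prop compactin X Y"
  proof
    assume E: "EC_prop lindelof_in X Y"
    show "EC_prop compactin X Y" unfolding EC_prop_def
    proof (intro allI impI)
      fix f assume f: "continuous_map X Y f"
      obtain Z y where Z: "Z \<subseteq> topspace X" "lindelof_in X Z" "f ` (topspace X - Z) = {y}"
        using E[unfolded EC_prop_def, rule_format, OF f] by (elim exE conjE) (rule that; assumption+; auto)
      obtain K where K1: "compactin X K" "Z \<subseteq> K" "topspace X - K \<noteq> {}" using K[OF Z(2)] by auto
      have "f ` (topspace X - K) \<subseteq> {y}" using Z(3) K1(2) by auto
      then have "f ` (topspace X - K) = {y}" using K1(3) by auto
      moreover have "K \<subseteq> topspace X" using K1(1) compactin_subset_topspace by auto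
      ultimately show "\<exists>Z. Z \<subseteq> topspace X \<and> compactin X Z \<and> (\<exists>y. f ` (topspace X - Z) = {y})"
        using K1(1) by auto
    qed
  next
    assume E: "EC_prop compactin X Y"
    show "EC_prop lindelof_in X Y" unfolding EC_prop_def
    proof (intro allI impI)
      fix f assume f: "continuous_map X Y f"
      obtain Z y where Z: "Z \<subseteq> topspace X" "compactin X Z" "f ` (topspace X - Z) = {y}"
        using E[unfolded EC_prop_def, rule_format, OF f] by (elim exE conjE) (rule that; assumption+; auto)
      then show "\<exists>Z. Z \<subseteq> topspace X \<and> lindelof_in X Z \<and> (\<exists>y. f ` (topspace X - Z) = {y})"
        using Z cpt_lind[OF Z(2)] by auto
    qed
  qed
  have S: "S_prop lindelof_in X Y \<longleftrightarrow> S_prop compactin X Y"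
  proof
    assume E: "S_prop lindelof_in X Y"
    show "S_prop compactin X Y" unfolding S_prop_def
    proof (intro allI impI)
      fix f assume f: "continuous_map X Y f"
      obtain Z r where Z: "Z \<subseteq> topspace X" "lindelof_in X Z"
        "continuous_map X (subtopology X Z) r" "\<forall>x\<in>Z. r x = x" "\<forall>x\<in>topspace X. f (r x) = f x"
        using E[unfolded S_prop_def, rule_format, OF f] by (elim exE conjE) (rule that; assumption+; auto)
      have r': "continuous_map X X r"
        using Z(3) continuous_map_into_fulltopology by auto
      have cl: "closedin X {x \<in> topspace X. r x = id x}"
        by (rule closedin_continuous_maps_eq[OF assms(1) r' continuous_map_id])
      have "{x \<in> topspace X. r x = id x} = Z"
      proof
        show "Z \<subseteq> {x \<in> topspace X. r x = id x}" using Z(1,4) by auto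
        show "{x \<in> topspace X. r x = id x} \<subseteq> Z"
        proof
          fix x assume x: "x \<in> {x \<in> topspace X. r x = id x}"
          then have "r x \<in> topspace (subtopology X Z)"
            using continuous_map_image_subset_topspace[OF Z(3)] x by auto
          then show "x \<in> Z" using x by auto
        qed
      qed
      then have Zcl: "closedin X Z" using cl by simp
      obtain K where K1: "compactin X K" "Z \<subseteq> K" using K[OF Z(2)] by auto
      have "compactin X Z" by (rule closed_compactin[OF K1(1,2) Zcl])
      then show "\<exists>Z r. Z \<subseteq> topspace X \<and> compactin X Z \<and>
        continuous_map X (subtopology X Z) r \<and> (\<forall>x\<in>Z. r x = x) \<and> (\<forall>x\<in>topspace X. f (r x) = f x)"
        using Z by auto
    qed
  next
    assume E: "S_prop compactin X Y"
    show "S_prop lindelof_in X Y" unfolding S_prop_def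
    proof (intro allI impI)
      fix f assume f: "continuous_map X Y f"
      obtain Z r where Z: "Z \<subseteq> topspace X" "compactin X Z"
        "continuous_map X (subtopology X Z) r" "\<forall>x\<in>Z. r x = x" "\<forall>x\<in>topspace X. f (r x) = f x"
        using E[unfolded S_prop_def, rule_format, OF f] by (elim exE conjE) (rule that; assumption+; auto)
      then show "\<exists>Z r. Z \<subseteq> topspace X \<and> lindelof_in X Z \<and>
        continuous_map X (subtopology X Z) r \<and> (\<forall>x\<in>Z. r x = x) \<and> (\<forall>x\<in>topspace X. f (r x) = f x)"
        using Z cpt_lind[OF Z(2)] by auto
    qed
  qed
  have L: "L_prop lindelof_in X Y \<longleftrightarrow> L_prop compactin X Y"
  proof
    assume E: "L_prop lindelof_in X Y"
    show "L_prop compactin X Y" unfolding L_prop_def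
    proof (intro allI impI)
      fix f assume f: "continuous_map X Y f"
      obtain Z where Z: "Z \<subseteq> topspace X" "lindelof_in X Z" "f ` Z = f ` topspace X"
        using E[unfolded L_prop_def, rule_format, OF f] by (elim exE conjE) (rule that; assumption+; auto)
      obtain K where K1: "compactin X K" "Z \<subseteq> K" using K[OF Z(2)] by auto
      have Kt: "K \<subseteq> topspace X" using K1(1) compactin_subset_topspace by auto
      have "f ` K = f ` topspace X"
      proof
        show "f ` K \<subseteq> f ` topspace X" using Kt by (rule image_mono)
        have "f ` Z \<subseteq> f ` K" using K1(2) by (rule image_mono)
        then show "f ` topspace X \<subseteq> f ` K" using Z(3) by simp
      qed
      then show "\<exists>Z. Z \<subseteq> topspace X \<and> compactin X Z \<and> f ` Z = f ` topspace X"
        using K1(1) Kt by auto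
    qed
  next
    assume E: "L_prop compactin X Y"
    show "L_prop lindelof_in X Y" unfolding L_prop_def
    proof (intro allI impI)
      fix f assume f: "continuous_map X Y f"
      obtain Z where Z: "Z \<subseteq> topspace X" "compactin X Z" "f ` Z = f ` topspace X"
        using E[unfolded L_prop_def, rule_format, OF f] by (elim exE conjE) (rule that; assumption+; auto)
      then show "\<exists>Z. Z \<subseteq> topspace X \<and> lindelof_in X Z \<and> f ` Z = f ` topspace X"
        using Z cpt_lind[OF Z(2)] by auto
    qed
  qed
  have BR: "BR_prop lindelof_in X Y \<longleftrightarrow> BR_prop compactin X Y"
  proof
    assume E: "BR_prop lindelof_in X Y"
    show "BR_prop compactin X Y" unfolding BR_prop_def
    proof (intro allI impI)
      fix f assume f: "continuous_map X Y f"
      have "\<exists>Z. Z \<subseteq> topspace X \<and> lindelof_in X Z \<and>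
        (\<forall>W. Z \<subseteq> W \<and> W \<subseteq> topspace X \<and> lindelof_in X W \<longrightarrow>
             f ` (topspace X - W) = f ` (topspace X - Z))"
        using E[unfolded BR_prop_def, rule_format, OF f] .
      then obtain Z where Z1: "Z \<subseteq> topspace X" "lindelof_in X Z" and
        Z2: "\<forall>W. Z \<subseteq> W \<and> W \<subseteq> topspace X \<and> lindelof_in X W \<longrightarrow>
             f ` (topspace X - W) = f ` (topspace X - Z)" by (elim exE conjE)
      have Z3: "f ` (topspace X - W) = f ` (topspace X - Z)"
        if "Z \<subseteq> W" "W \<subseteq> topspace X" "lindelof_in X W" for W
        using Z2 that by simp
      note Z = Z1 Z3
      obtain K where K1: "compactin X K" "Z \<subseteq> K" using K[OF Z(2)] by auto
      have Kt: "K \<subseteq> topspace X" using K1(1) compactin_subset_topspace by auto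
      have fK: "f ` (topspace X - K) = f ` (topspace X - Z)"
        using Z(3)[OF K1(2) Kt cpt_lind[OF K1(1)]] .
      have KW: "f ` (topspace X - W) = f ` (topspace X - K)"
        if W: "K \<subseteq> W" "W \<subseteq> topspace X" "compactin X W" for W
      proof -
        have "Z \<subseteq> W" using W(1) K1(2) by auto
        then show ?thesis using Z(3)[OF _ W(2) cpt_lind[OF W(3)]] fK by simp
      qed
      then show "\<exists>Z. Z \<subseteq> topspace X \<and> compactin X Z \<and>
        (\<forall>W. Z \<subseteq> W \<and> W \<subseteq> topspace X \<and> compactin X W \<longrightarrow>
             f ` (topspace X - W) = f ` (topspace X - Z))"
        by (intro exI[of _ K] conjI allI impI K1(1) Kt) (rule KW; simp)
    qed
  next
    assume E: "BR_prop compactin X Y"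
    show "BR_prop lindelof_in X Y" unfolding BR_prop_def
    proof (intro allI impI)
      fix f assume f: "continuous_map X Y f"
      have "\<exists>Z. Z \<subseteq> topspace X \<and> compactin X Z \<and>
        (\<forall>W. Z \<subseteq> W \<and> W \<subseteq> topspace X \<and> compactin X W \<longrightarrow>
             f ` (topspace X - W) = f ` (topspace X - Z))"
        using E[unfolded BR_prop_def, rule_format, OF f] .
      then obtain Z where Z1: "Z \<subseteq> topspace X" "compactin X Z" and
        Z2: "\<forall>W. Z \<subseteq> W \<and> W \<subseteq> topspace X \<and> compactin X W \<longrightarrow>
             f ` (topspace X - W) = f ` (topspace X - Z)" by (elim exE conjE)
      have Z3: "f ` (topspace X - W) = f ` (topspace X - Z)"
        if "Z \<subseteq> W" "W \<subseteq> topspace X" "compactin X W" for W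
        using Z2 that by simp
      note Z = Z1 Z3
      have ZW: "f ` (topspace X - W) = f ` (topspace X - Z)"
        if W: "Z \<subseteq> W" "W \<subseteq> topspace X" "lindelof_in X W" for W
      proof -
        obtain K where K1: "compactin X K" "W \<subseteq> K" using K[OF W(3)] by auto
        have Kt: "K \<subseteq> topspace X" using K1(1) compactin_subset_topspace by auto
        have fK: "f ` (topspace X - K) = f ` (topspace X - Z)"
          using Z(3)[OF _ Kt K1(1)] W(1) K1(2) by auto
        have "f ` (topspace X - K) \<subseteq> f ` (topspace X - W)" using K1(2) by auto
        moreover have "f ` (topspace X - W) \<subseteq> f ` (topspace X - Z)" using W(1) by auto
        ultimately show ?thesis using fK by auto
      qed
      then show "\<exists>Z. Z \<subseteq> topspace X \<and> lindelof_in X Z \<and>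
        (\<forall>W. Z \<subseteq> W \<and> W \<subseteq> topspace X \<and> lindelof_in X W \<longrightarrow>
             f ` (topspace X - W) = f ` (topspace X - Z))"
        by (intro exI[of _ Z] conjI allI impI Z(1) cpt_lind[OF Z(2)]) (rule ZW; simp)
    qed
  qed
  show ?thesis using cc EC S L BR by simp
qed

end
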